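(* Let $\{\mathbf{x}_k\}_{k=0}^{K}$ be the sequence generated by the CG-BiO algorithm. Then for any $k\geq 0$, $f(\mathbf{x}_{k+1})\leq f(\mathbf{x}_k)-\gamma_k \mathcal{G}(\mathbf{x}_k) +\frac{1}{2}\gamma_k^2L_f D^2$ and $g(\mathbf{x}_{k+1})\leq (1-\gamma_k) g(\mathbf{x}_k)+\gamma_k g(\mathbf{x}_0) +\frac{1}{2}\gamma_k^2 L_g D^2$.
   Context: Consider the simple bilevel problem $\min_{\mathbf{x}\in\mathbb{R}^d} f(\mathbf{x})$ s.t. $\mathbf{x}\in \operatorname*{arg\,min}_{\mathbf{z}\in\mathcal{Z}} g(\mathbf{z})$. Assume: $\mathcal{Z}\subset\mathbb{R}^d$ is convex and compact with diameter $D$ in a norm $\|\cdot\|$ (dual norm $\|\cdot\|_*$); $g$ is convex and continuously differentiable on an open set containing $\mathcal{Z}$ with $L_g$-Lipschitz gradient on $\mathcal{Z}$; $f$ is continuously differentiable with $L_f$-Lipschitz gradient. Let $g^*=\min_{\mathbf{z}\in\mathcal{Z}}g(\mathbf{z})$ and $\mathcal{X}_g^*=\operatorname*{arg\,min}_{\mathbf{z}\in\mathcal{Z}}g(\mathbf{z})$. The CG-BiO algorithm: choose $\mathbf{x}_0\in\mathcal{Z}$ with $g(\mathbf{x}_0)-g^*\le \epsilon_g/2$; at iteration $k$, let $\mathcal{X}_k=\{\mathbf{s}\in\mathcal{Z}: \langle\nabla g(\mathbf{x}_k),\mathbf{s}-\mathbf{x}_k\rangle\le g(\mathbf{x}_0)-g(\mathbf{x}_k)\}$,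 compute $\mathbf{s}_k\in\operatorname*{arg\,min}_{\mathbf{s}\in\mathcal{X}_k}\langle\nabla f(\mathbf{x}_k),\mathbf{s}\rangle$ and set $\mathbf{x}_{k+1}=(1-\gamma_k)\mathbf{x}_k+\gamma_k\mathbf{s}_k$ with stepsize $\gamma_k\in[0,1]$. The Frank–Wolfe gap is $\mathcal{G}(\mathbf{x})=\max_{\mathbf{s}\in\mathcal{X}_g^*}\langle\nabla f(\mathbf{x}),\mathbf{x}-\mathbf{s}\rangle$. *)

theory Defs
  imports "HOL-Analysis.Analysis"
begin

text \<open>A general norm on a finite-dimensional real space (R^d is modelled by a euclidean_space type).\<close>
definition is_norm :: "('a::euclidean_space \<Rightarrow> real) \<Rightarrow> bool" where
  "is_norm N \<longleftrightarrow> (\<forall>x. 0 \<le> N x) \<and> (\<forall>x. N x = 0 \<longleftrightarrow> x = 0)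
     \<and> (\<forall>c x. N (c *\<^sub>R x) = \<bar>c\<bar> * N x) \<and> (\<forall>x y. N (x + y) \<le> N x + N y)"

definition dual_norm :: "('a::euclidean_space \<Rightarrow> real) \<Rightarrow> 'a \<Rightarrow> real" where
  "dual_norm N y = (SUP x\<in>{x. N x \<le> 1}. y \<bullet> x)"

definition diam_N :: "('a::euclidean_space \<Rightarrow> real) \<Rightarrow> 'a set \<Rightarrow> real" where
  "diam_N N Z = (SUP p\<in>Z \<times> Z. N (fst p - snd p))"

definition lower_opt :: "('a \<Rightarrow> real) \<Rightarrow> 'a set \<Rightarrow> real" where
  "lower_opt g Z = (INF z\<in>Z. g z)"

definition lower_sol :: "('a \<Rightarrow> real) \<Rightarrow> 'a set \<Rightarrow> 'a set" where
  "lower_sol g Z = {z\<in>Z. g z = lower_opt g Z}"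

definition fw_gap :: "('a::euclidean_space \<Rightarrow> 'a) \<Rightarrow> ('a \<Rightarrow> real) \<Rightarrow> 'a set \<Rightarrow> 'a \<Rightarrow> real" where
  "fw_gap grad_f g Z x = (SUP s\<in>lower_sol g Z. grad_f x \<bullet> (x - s))"

definition cut_set :: "('a::euclidean_space \<Rightarrow> real) \<Rightarrow> ('a \<Rightarrow> 'a) \<Rightarrow> 'a set \<Rightarrow> 'a \<Rightarrow> 'a \<Rightarrow> 'a set" where
  "cut_set g grad_g Z x0 xk = {s\<in>Z. grad_g xk \<bullet> (s - xk) \<le> g x0 - g xk}"

end

theory Submission
  imports Defs
begin

lemma isnormD:
  assumes "is_norm N"
  shows "N x \<ge> 0" "N (c *\<^sub>R x) = \<bar>c\<bar> * N x" "N (x + y) \<le> N x + N y" "N x = 0 \<longleftrightarrow> x = 0"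
  using assms unfolding is_norm_def by auto

lemma norm_convex: assumes "is_norm N" shows "convex_on UNIV N"
proof (rule convex_onI)
  fix t :: real and x y assume t: "0 < t" "t < 1"
  have "N ((1 - t) *\<^sub>R x + t *\<^sub>R y) \<le> N ((1 - t) *\<^sub>R x) + N (t *\<^sub>R y)"
    using isnormD(3)[OF assms] by blast
  also have "\<dots> = (1 - t) * N x + t * N y" using isnormD(2)[OF assms] t by simp
  finally show "N ((1 - t) *\<^sub>R x + t *\<^sub>R y) \<le> (1 - t) * N x + t * N y" .
qed auto

lemma norm_cont: assumes "is_norm N" shows "continuous_on UNIV N"
  by (rule convex_on_continuous[OF open_UNIV norm_convex[OF assms]])

lemma norm_lower: assumes "is_norm N" shows "\<exists>c>0. \<forall>x. c * norm x \<le> N x"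
proof -
  let ?S = "sphere (0::'a) 1"
  obtain b :: 'a where b: "b \<in> Basis" using nonempty_Basis by blast
  have ne: "?S \<noteq> {}" using b by (auto simp: norm_Basis)
  obtain z where z: "z \<in> ?S" "\<forall>y\<in>?S. N z \<le> N y"
    using continuous_attains_inf[OF compact_sphere ne continuous_on_subset[OF norm_cont[OF assms]]] by blast
  have "z \<noteq> 0" using z by auto
  hence cpos: "N z > 0" using isnormD(1,4)[OF assms, of z] by auto
  show ?thesis
  proof (intro exI[of _ "N z"] conjI allI cpos)
    fix x :: 'a
    show "N z * norm x \<le> N x"
    proof (cases "x = 0")
      case True thus ?thesis using isnormD(1,4)[OF assms, of x] by simp
    next
      case False
      have "(1 / norm x) *\<^sub>R x \<in> ?S" using False by simp
      hence "N z \<le> N ((1 / norm x) *\<^sub>R x)" using z by blast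
      also have "\<dots> = N x / norm x" using isnormD(2)[OF assms] by simp
      finally show ?thesis using False by (simp add: field_simps)
    qed
  qed
qed

lemma dual_bdd: assumes "is_norm N" shows "bdd_above ((\<lambda>x. a \<bullet> x) ` {x. N x \<le> 1})"
proof -
  obtain c where c: "c > 0" "\<forall>x. c * norm x \<le> N x" using norm_lower[OF assms] by blast
  show ?thesis
  proof (rule bdd_aboveI2)
    fix x assume "x \<in> {x. N x \<le> 1}"
    hence "c * norm x \<le> 1" using c by (meson order_trans mem_Collect_eq)
    hence nx: "norm x \<le> 1 / c" using c by (simp add: field_simps)
    have "a \<bullet> x \<le> norm a * norm x" by (metis Cauchy_Schwarz_ineq2 abs_le_D1)
    also have "\<dots> \<le> norm a * (1 / c)" using mult_left_mono[OF nx norm_ge_zero] .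
    finally show "a \<bullet> x \<le> norm a * (1 / c)" .
  qed
qed

lemma dual_nonneg: assumes "is_norm N" shows "dual_norm N a \<ge> 0"
proof -
  have "N 0 \<le> 1" using isnormD(4)[OF assms, of 0] by simp
  hence "a \<bullet> 0 \<le> dual_norm N a" unfolding dual_norm_def
    by (intro cSUP_upper dual_bdd[OF assms]) auto
  thus ?thesis by simp
qed

lemma dual_ineq: assumes "is_norm N" shows "a \<bullet> v \<le> dual_norm N a * N v"
proof (cases "v = 0")
  case True thus ?thesis using isnormD(4)[OF assms, of 0] by simp
next
  case False
  hence nv: "N v > 0" using isnormD(1,4)[OF assms, of v] by auto
  let ?w = "(1 / N v) *\<^sub>R v"
  have "N ?w = 1" using isnormD(2)[OF assms] nv by simp
  hence "a \<bullet> ?w \<le> dual_norm N a" unfolding dual_norm_def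
    by (intro cSUP_upper dual_bdd[OF assms]) auto
  hence "(a \<bullet> v) / N v \<le> dual_norm N a" by simp
  thus ?thesis using nv by (simp add: field_simps)
qed

lemma descent:
  fixes F :: "'a::euclidean_space \<Rightarrow> real"
  assumes norm: "is_norm N"
    and der: "\<And>t. 0 \<le> t \<Longrightarrow> t \<le> 1 \<Longrightarrow> (F has_derivative (\<lambda>h. G (x + t *\<^sub>R (y - x)) \<bullet> h)) (at (x + t *\<^sub>R (y - x)))"
    and lip: "\<And>t. 0 \<le> t \<Longrightarrow> t \<le> 1 \<Longrightarrow> dual_norm N (G (x + t *\<^sub>R (y - x)) - G x) \<le> L * N (t *\<^sub>R (y - x))"
  shows "F y \<le> F x + G x \<bullet> (y - x) + L / 2 * (N (y - x))\<^sup>2"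
proof -
  define v where "v = y - x"
  define \<phi> where "\<phi> t = F (x + t *\<^sub>R v) - t * (G x \<bullet> v) - L / 2 * t\<^sup>2 * (N v)\<^sup>2" for t
  have "\<phi> 1 \<le> \<phi> 0"
  proof (rule DERIV_nonpos_imp_nonincreasing[of 0 1 \<phi>])
    fix t :: real assume t: "0 \<le> t" "t \<le> 1"
    have l: "((\<lambda>t. x + t *\<^sub>R v) has_derivative (\<lambda>h. h *\<^sub>R v)) (at t)"
      by (auto intro!: derivative_eq_intros)
    have c: "((\<lambda>t. F (x + t *\<^sub>R v)) has_derivative (\<lambda>h. G (x + t *\<^sub>R v) \<bullet> (h *\<^sub>R v))) (at t)"
      using has_derivative_compose[OF l der[OF t, folded v_def]] by (simp add: o_def)
    have c2: "((\<lambda>t. F (x + t *\<^sub>R v)) has_real_derivative (G (x + t *\<^sub>R v) \<bullet> v)) (at t)"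
    proof -
      have "(\<lambda>h. G (x + t *\<^sub>R v) \<bullet> (h *\<^sub>R v)) = (*) (G (x + t *\<^sub>R v) \<bullet> v)" by (auto simp: fun_eq_iff)
      thus ?thesis unfolding has_field_derivative_def using c by simp
    qed
    have d: "(\<phi> has_real_derivative (G (x + t *\<^sub>R v) \<bullet> v - G x \<bullet> v - L / 2 * (2 * t) * (N v)\<^sup>2)) (at t)"
      unfolding \<phi>_def
      by (rule derivative_eq_intros c2 refl)+ (auto intro!: derivative_eq_intros)
    have "G (x + t *\<^sub>R v) \<bullet> v - G x \<bullet> v = (G (x + t *\<^sub>R v) - G x) \<bullet> v" by (simp add: inner_diff_left)
    also have "\<dots> \<le> dual_norm N (G (x + t *\<^sub>R v) - G x) * N v" by (rule dual_ineq[OF norm])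
    also have "\<dots> \<le> L * N (t *\<^sub>R v) * N v"
      using lip[OF t, folded v_def] isnormD(1)[OF norm, of v] by (simp add: mult_right_mono)
    also have "\<dots> = L * t * (N v)\<^sup>2" using isnormD(2)[OF norm] t by (simp add: power2_eq_square)
    finally show "\<exists>y. (\<phi> has_real_derivative y) (at t) \<and> y \<le> 0"
      using d by (intro exI[of _ "G (x + t *\<^sub>R v) \<bullet> v - G x \<bullet> v - L / 2 * (2 * t) * (N v)\<^sup>2"]) auto
  qed simp
  thus ?thesis unfolding \<phi>_def v_def by simp
qed

lemma convex_grad:
  fixes g :: "'a::euclidean_space \<Rightarrow> real"
  assumes cv: "convex_on Z g" and xZ: "x \<in> Z" and sZ: "s \<in> Z"
    and der: "(g has_derivative (\<lambda>h. G \<bullet> h)) (at x)"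
  shows "g x + G \<bullet> (s - x) \<le> g s"
proof -
  define v where "v = s - x"
  have l: "((\<lambda>t. x + t *\<^sub>R v) has_derivative (\<lambda>h. h *\<^sub>R v)) (at 0)"
    by (auto intro!: derivative_eq_intros)
  have c: "((\<lambda>t. g (x + t *\<^sub>R v)) has_derivative (\<lambda>h. G \<bullet> (h *\<^sub>R v))) (at 0)"
  proof -
    have der': "(g has_derivative (\<lambda>h. G \<bullet> h)) (at (x + 0 *\<^sub>R v))" using der by simp
    show ?thesis using has_derivative_compose[OF l der'] by (simp add: o_def)
  qed
  have "(\<lambda>h. G \<bullet> (h *\<^sub>R v)) = (*) (G \<bullet> v)" by (auto simp: fun_eq_iff)
  hence "((\<lambda>t. g (x + t *\<^sub>R v)) has_real_derivative (G \<bullet> v)) (at 0)"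
    unfolding has_field_derivative_def using c by simp
  hence "((\<lambda>t. g (x + t *\<^sub>R v)) has_real_derivative (G \<bullet> v)) (at_right 0)"
    by (rule has_field_derivative_at_within)
  hence lim: "((\<lambda>t. (g (x + t *\<^sub>R v) - g x) / t) \<longlongrightarrow> G \<bullet> v) (at_right 0)"
    unfolding has_field_derivative_iff by simp
  have ev: "eventually (\<lambda>t. (g (x + t *\<^sub>R v) - g x) / t \<le> g s - g x) (at_right (0::real))"
    using eventually_at_right_real[of 0 1]
  proof (rule eventually_mono)
    fix t :: real assume t: "t \<in> {0<..<1}"
    have "x + t *\<^sub>R v = (1 - t) *\<^sub>R x + t *\<^sub>R s" by (simp add: v_def algebra_simps)
    hence "g (x + t *\<^sub>R v) \<le> (1 - t) * g x + t * g s"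
      using convex_onD[OF cv, of t x s] t xZ sZ by simp
    hence "g (x + t *\<^sub>R v) - g x \<le> t * (g s - g x)" by (simp add: algebra_simps)
    thus "(g (x + t *\<^sub>R v) - g x) / t \<le> g s - g x" using t by (simp add: field_simps)
  qed simp
  have "G \<bullet> v \<le> g s - g x"
    by (rule tendsto_upperbound[OF lim ev]) simp
  thus ?thesis unfolding v_def by simp
qed

lemma quad_bound:
  assumes norm: "is_norm N" and pos: "\<forall>y\<in>Z. \<forall>z\<in>Z. 0 \<le> L * N (y - z)"
    and bdd: "bdd_above ((\<lambda>p. N (fst p - snd p)) ` (Z \<times> Z))"
    and y: "y \<in> Z" and z: "z \<in> Z"
  shows "L * (N (y - z))\<^sup>2 \<le> L * (diam_N N Z)\<^sup>2"
proof (cases "L \<ge> 0")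
  case True
  have "N (y - z) \<le> diam_N N Z" unfolding diam_N_def
    using cSUP_upper[OF _ bdd, of "(y, z)"] y z by auto
  moreover have "0 \<le> N (y - z)" using isnormD(1)[OF norm] .
  ultimately show ?thesis using True by (intro mult_left_mono power_mono) auto
next
  case False
  have zero: "N (a - b) = 0" if "a \<in> Z" "b \<in> Z" for a b
    using pos that False isnormD(1)[OF norm, of "a - b"] by (meson mult_less_0_iff order.not_eq_order_implies_strict linorder_not_le)
  have "diam_N N Z = 0" unfolding diam_N_def
    using y zero by (subst cSUP_const[symmetric, of "Z \<times> Z" 0]) (auto intro!: SUP_cong)
  thus ?thesis using zero[OF y z] by simp
qed

theorem lemma2:
  fixes N :: "'a::euclidean_space \<Rightarrow> real"
    and f g :: "'a \<Rightarrow> real" and grad_f grad_g :: "'a \<Rightarrow> 'a"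
    and Z U :: "'a set" and D L_f L_g \<epsilon>_g :: real
    and x s :: "nat \<Rightarrow> 'a" and \<gamma> :: "nat \<Rightarrow> real" and K k :: nat
  assumes norm: "is_norm N"
    and Z: "convex Z" "compact Z" and D: "D = diam_N N Z"
    and U: "open U" "Z \<subseteq> U"
    and g_deriv: "\<forall>y\<in>U. (g has_derivative (\<lambda>h. grad_g y \<bullet> h)) (at y)"
    and g_cont: "continuous_on U grad_g"
    and g_convex: "convex_on Z g"
    and g_lip: "\<forall>y\<in>Z. \<forall>z\<in>Z. dual_norm N (grad_g y - grad_g z) \<le> L_g * N (y - z)"
    and f_deriv: "\<forall>y. (f has_derivative (\<lambda>h. grad_f y \<bullet> h)) (at y)"
    and f_cont: "continuous_on UNIV grad_f"
    and f_lip: "\<forall>y z. dual_norm N (grad_f y - grad_f z) \<le> L_f * N (y - z)"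
    and x0: "x 0 \<in> Z" "g (x 0) - lower_opt g Z \<le> \<epsilon>_g / 2"
    and s_def: "\<forall>j<K. is_arg_min (\<lambda>v. grad_f (x j) \<bullet> v) (\<lambda>v. v \<in> cut_set g grad_g Z (x 0) (x j)) (s j)"
    and step: "\<forall>j<K. 0 \<le> \<gamma> j \<and> \<gamma> j \<le> 1 \<and> x (Suc j) = (1 - \<gamma> j) *\<^sub>R x j + \<gamma> j *\<^sub>R s j"
    and k: "k < K"
  shows "f (x (Suc k)) \<le> f (x k) - \<gamma> k * fw_gap grad_f g Z (x k) + 1/2 * (\<gamma> k)\<^sup>2 * L_f * D\<^sup>2
       \<and> g (x (Suc k)) \<le> (1 - \<gamma> k) * g (x k) + \<gamma> k * g (x 0) + 1/2 * (\<gamma> k)\<^sup>2 * L_g * D\<^sup>2"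
proof -
  have argD: "s j \<in> cut_set g grad_g Z (x 0) (x j)"
     "\<And>v. v \<in> cut_set g grad_g Z (x 0) (x j) \<Longrightarrow> grad_f (x j) \<bullet> s j \<le> grad_f (x j) \<bullet> v" if "j < K" for j
    using s_def that unfolding is_arg_min_def by (auto simp: not_less)
  have inZ: "j \<le> K \<Longrightarrow> x j \<in> Z" for j
  proof (induction j)
    case 0 thus ?case using x0 by simp
  next
    case (Suc j)
    hence j: "j < K" by simp
    have "s j \<in> Z" using argD(1)[OF j] unfolding cut_set_def by simp
    moreover have "x j \<in> Z" using Suc j by simp
    ultimately show ?case using step j Z(1) by (simp add: convex_def)
  qed
  define xk sk gk where "xk = x k" and "sk = s k" and "gk = \<gamma> k"
  have xkZ: "xk \<in> Z" using inZ k unfolding xk_def by simp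
  have skcut: "sk \<in> cut_set g grad_g Z (x 0) xk" using argD(1)[OF k] unfolding sk_def xk_def .
  hence skZ: "sk \<in> Z" and skg: "grad_g xk \<bullet> (sk - xk) \<le> g (x 0) - g xk" unfolding cut_set_def by auto
  have g01: "0 \<le> gk" "gk \<le> 1" and xk1: "x (Suc k) = (1 - gk) *\<^sub>R xk + gk *\<^sub>R sk"
    using step k unfolding gk_def xk_def sk_def by auto
  have diff: "x (Suc k) - xk = gk *\<^sub>R (sk - xk)" using xk1 by (simp add: algebra_simps)
  have seg: "xk + t *\<^sub>R (x (Suc k) - xk) \<in> Z" if "0 \<le> t" "t \<le> 1" for t
  proof -
    have "xk + t *\<^sub>R (x (Suc k) - xk) = (1 - t * gk) *\<^sub>R xk + (t * gk) *\<^sub>R sk"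
      unfolding diff by (simp add: algebra_simps)
    moreover have "0 \<le> t * gk" "t * gk \<le> 1" using that g01 by (auto simp: mult_le_one)
    ultimately show ?thesis using Z(1) xkZ skZ by (simp add: convex_def)
  qed
  have bdd: "bdd_above ((\<lambda>p. N (fst p - snd p)) ` (Z \<times> Z))"
  proof -
    have "continuous_on (Z \<times> Z) (\<lambda>p. N (fst p - snd p))"
      by (rule continuous_on_compose2[OF norm_cont[OF norm]]) (auto intro!: continuous_intros)
    hence "compact ((\<lambda>p. N (fst p - snd p)) ` (Z \<times> Z))"
      using compact_continuous_image compact_Times Z(2) by blast
    thus ?thesis by (simp add: bounded_imp_bdd_above compact_imp_bounded)
  qed
  have Nhom: "N (gk *\<^sub>R (sk - xk)) = gk * N (sk - xk)" using isnormD(2)[OF norm] g01 by simp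
  have gcont: "continuous_on Z g"
    using g_deriv U(2) by (intro continuous_at_imp_continuous_on) (auto dest: has_derivative_continuous)
  obtain zm where zm: "zm \<in> Z" "\<forall>y\<in>Z. g zm \<le> g y"
    using continuous_attains_inf[OF Z(2) _ gcont] x0(1) by blast
  have opt: "lower_opt g Z = g zm" unfolding lower_opt_def
  proof (rule antisym)
    show "(INF z\<in>Z. g z) \<le> g zm"
      by (rule cINF_lower[OF _ zm(1)]) (rule bdd_belowI2[of _ "g zm"], use zm in blast)
    show "g zm \<le> (INF z\<in>Z. g z)" using zm by (intro cINF_greatest) auto
  qed
  have solne: "lower_sol g Z \<noteq> {}" using zm opt unfolding lower_sol_def by auto
  have solcut: "z \<in> cut_set g grad_g Z (x 0) xk" if "z \<in> lower_sol g Z" for z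
  proof -
    have z: "z \<in> Z" "g z = g zm" using that opt unfolding lower_sol_def by auto
    have "g xk + grad_g xk \<bullet> (z - xk) \<le> g z"
      using convex_grad[OF g_convex xkZ z(1)] g_deriv xkZ U(2) by auto
    moreover have "g z \<le> g (x 0)" using z zm x0(1) by simp
    ultimately show ?thesis using z unfolding cut_set_def by simp
  qed
  have gap: "fw_gap grad_f g Z xk \<le> grad_f xk \<bullet> (xk - sk)"
    unfolding fw_gap_def
  proof (rule cSUP_least[OF solne])
    fix z assume "z \<in> lower_sol g Z"
    hence "grad_f xk \<bullet> sk \<le> grad_f xk \<bullet> z" using argD(2)[OF k] solcut unfolding xk_def sk_def by blast
    thus "grad_f xk \<bullet> (xk - z) \<le> grad_f xk \<bullet> (xk - sk)" by (simp add: inner_diff_right)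
  qed
  have fdesc: "f (x (Suc k)) \<le> f xk + grad_f xk \<bullet> (x (Suc k) - xk) + L_f / 2 * (N (x (Suc k) - xk))\<^sup>2"
  proof (rule descent[OF norm])
    fix t :: real assume t: "0 \<le> t" "t \<le> 1"
    show "(f has_derivative (\<lambda>h. grad_f (xk + t *\<^sub>R (x (Suc k) - xk)) \<bullet> h)) (at (xk + t *\<^sub>R (x (Suc k) - xk)))"
      using f_deriv by blast
    show "dual_norm N (grad_f (xk + t *\<^sub>R (x (Suc k) - xk)) - grad_f xk) \<le> L_f * N (t *\<^sub>R (x (Suc k) - xk))"
      using f_lip by (metis add_diff_cancel_left')
  qed
  have fpos: "\<forall>y\<in>Z. \<forall>z\<in>Z. 0 \<le> L_f * N (y - z)"
    using f_lip dual_nonneg[OF norm] by (meson order_trans)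
  have gpos: "\<forall>y\<in>Z. \<forall>z\<in>Z. 0 \<le> L_g * N (y - z)"
    using g_lip dual_nonneg[OF norm] by (meson order_trans)
  have qf: "L_f * (N (sk - xk))\<^sup>2 \<le> L_f * D\<^sup>2" using quad_bound[OF norm fpos bdd skZ xkZ] D by simp
  have qg: "L_g * (N (sk - xk))\<^sup>2 \<le> L_g * D\<^sup>2" using quad_bound[OF norm gpos bdd skZ xkZ] D by simp
  have part1: "f (x (Suc k)) \<le> f xk - gk * fw_gap grad_f g Z xk + 1/2 * gk\<^sup>2 * L_f * D\<^sup>2"
  proof -
    have "grad_f xk \<bullet> (x (Suc k) - xk) = - (gk * (grad_f xk \<bullet> (xk - sk)))"
      unfolding diff by (simp add: inner_diff_right algebra_simps)
    also have "\<dots> \<le> - (gk * fw_gap grad_f g Z xk)" using gap g01 by (simp add: mult_left_mono)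
    finally have a: "grad_f xk \<bullet> (x (Suc k) - xk) \<le> - (gk * fw_gap grad_f g Z xk)" .
    have "L_f / 2 * (N (x (Suc k) - xk))\<^sup>2 = 1/2 * gk\<^sup>2 * (L_f * (N (sk - xk))\<^sup>2)"
      unfolding diff Nhom by (simp add: power_mult_distrib)
    also have "\<dots> \<le> 1/2 * gk\<^sup>2 * (L_f * D\<^sup>2)" using qf by (simp add: mult_left_mono)
    finally show ?thesis using fdesc a by simp
  qed
  have gdesc: "g (x (Suc k)) \<le> g xk + grad_g xk \<bullet> (x (Suc k) - xk) + L_g / 2 * (N (x (Suc k) - xk))\<^sup>2"
  proof (rule descent[OF norm])
    fix t :: real assume t: "0 \<le> t" "t \<le> 1"
    show "(g has_derivative (\<lambda>h. grad_g (xk + t *\<^sub>R (x (Suc k) - xk)) \<bullet> h)) (at (xk + t *\<^sub>R (x (Suc k) - xk)))"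
      using g_deriv seg[OF t] U(2) by blast
    show "dual_norm N (grad_g (xk + t *\<^sub>R (x (Suc k) - xk)) - grad_g xk) \<le> L_g * N (t *\<^sub>R (x (Suc k) - xk))"
      using g_lip seg[OF t] xkZ by (metis add_diff_cancel_left')
  qed
  have part2: "g (x (Suc k)) \<le> (1 - gk) * g xk + gk * g (x 0) + 1/2 * gk\<^sup>2 * L_g * D\<^sup>2"
  proof -
    have "grad_g xk \<bullet> (x (Suc k) - xk) = gk * (grad_g xk \<bullet> (sk - xk))"
      unfolding diff by simp
    also have "\<dots> \<le> gk * (g (x 0) - g xk)" using skg g01 by (simp add: mult_left_mono)
    finally have a: "grad_g xk \<bullet> (x (Suc k) - xk) \<le> gk * (g (x 0) - g xk)" .
    have "L_g / 2 * (N (x (Suc k) - xk))\<^sup>2 = 1/2 * gk\<^sup>2 * (L_g * (N (sk - xk))\<^sup>2)"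
      unfolding diff Nhom by (simp add: power_mult_distrib)
    also have "\<dots> \<le> 1/2 * gk\<^sup>2 * (L_g * D\<^sup>2)" using qg by (simp add: mult_left_mono)
    finally show ?thesis using gdesc a by (simp add: algebra_simps)
  qed
  show ?thesis using part1 part2 unfolding xk_def gk_def by simp
qed

end
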